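(* Let $n\in\mathbb{N}_0$. The range of the operator $I+RM+MR$ on $\mathbb{P}^\perp_{n,n-1}(\widehat T)$ is exactly $\{p\in\mathbb{P}^\perp_{n,n-1}(\widehat T): RMp=p\}$.
   Context: $\widehat T$ is the triangle with vertices $(0,0),(1,0),(0,1)$; $\mathbb{P}^\perp_{0,-1}(\widehat T)=\mathbb{P}_0$ and for $n\ge1$, $\mathbb{P}^\perp_{n,n-1}(\widehat T)$ is the space of polynomials of total degree $\le n$ that are $L^2(\widehat T)$-orthogonal to all polynomials of degree $\le n-1$. The linear maps $M,R$ are $Mp(x_1,x_2):=p(1-x_1-x_2,x_2)$ and $Rp(x_1,x_2):=p(x_2,x_1)$; both are automorphisms of $\mathbb{P}^\perp_{n,n-1}(\widehat T)$, and $RM$, $MR$ denote operator compositions. *)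

theory Defs
  imports "HOL-Analysis.Analysis"
begin

definition poly_deg_le :: "nat \<Rightarrow> (real \<times> real \<Rightarrow> real) \<Rightarrow> bool" where
  "poly_deg_le n p \<longleftrightarrow> (\<exists>c :: nat \<Rightarrow> nat \<Rightarrow> real.
      p = (\<lambda>(x, y). \<Sum>i\<le>n. \<Sum>j\<le>n - i. c i j * x ^ i * y ^ j))"

definition ref_tri :: "(real \<times> real) set" where
  "ref_tri = {(x, y). 0 \<le> x \<and> 0 \<le> y \<and> x + y \<le> 1}"

definition Pperp :: "nat \<Rightarrow> (real \<times> real \<Rightarrow> real) set" where
  "Pperp n = {p. poly_deg_le n p \<and>
     (n \<ge> 1 \<longrightarrow> (\<forall>q. poly_deg_le (n - 1) q \<longrightarrow> integral ref_tri (\<lambda>z. p z * q z) = 0))}"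

definition Mop :: "(real \<times> real \<Rightarrow> real) \<Rightarrow> (real \<times> real \<Rightarrow> real)" where
  "Mop p = (\<lambda>(x, y). p (1 - x - y, y))"

definition Rop :: "(real \<times> real \<Rightarrow> real) \<Rightarrow> (real \<times> real \<Rightarrow> real)" where
  "Rop p = (\<lambda>(x, y). p (y, x))"

end

theory Submission
  imports Defs
begin

definition phiM :: "real \<times> real \<Rightarrow> real \<times> real" where
  "phiM z = (1 - fst z - snd z, snd z)"

lemma phiM_meas[measurable]: "phiM \<in> borel_measurable borel"
  unfolding phiM_def by (intro borel_measurable_continuous_onI continuous_intros)

lemma distr_phiM: "distr lborel lborel phiM = (lborel :: (real \<times> real) measure)"
proof (rule measure_eqI)
  show "sets (distr lborel lborel phiM) = sets (lborel :: (real \<times> real) measure)" by simp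
next
  fix A :: "(real \<times> real) set" assume "A \<in> sets (distr lborel lborel phiM)"
  then have A: "A \<in> sets borel" by simp
  have mA[measurable]: "(\<lambda>z. indicator A z :: ennreal) \<in> borel_measurable (lborel \<Otimes>\<^sub>M lborel)"
    using A by (simp add: lborel_prod)
  have "emeasure (distr lborel lborel phiM) A = emeasure lborel (phiM -` A)"
    using A by (simp add: emeasure_distr)
  also have "\<dots> = (\<integral>\<^sup>+z. indicator (phiM -` A) z \<partial>lborel)"
    using A measurable_sets[OF phiM_meas A] by (simp add: nn_integral_indicator)
  also have "\<dots> = (\<integral>\<^sup>+z. indicator A (phiM z) \<partial>lborel)"
    by (simp add: indicator_vimage)
  also have "\<dots> = (\<integral>\<^sup>+z. indicator A (phiM z) \<partial>(lborel \<Otimes>\<^sub>M lborel))"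
    by (simp add: lborel_prod)
  also have "\<dots> = (\<integral>\<^sup>+y. \<integral>\<^sup>+x. indicator A (1 - x - y, y) \<partial>lborel \<partial>lborel)"
    by (subst lborel_pair.nn_integral_snd[symmetric]) (auto simp: phiM_def)
  also have "\<dots> = (\<integral>\<^sup>+y. \<integral>\<^sup>+x. indicator A (x, y) \<partial>lborel \<partial>lborel)"
  proof (rule nn_integral_cong)
    fix y :: real
    have m: "(\<lambda>x. indicator A (x, y) :: ennreal) \<in> borel_measurable borel"
      using A by measurable
    show "(\<integral>\<^sup>+x. indicator A (1 - x - y, y) \<partial>lborel) = (\<integral>\<^sup>+x. indicator A (x, y) \<partial>lborel)"
      using nn_integral_real_affine[OF m, of "-1" "1 - y"] by (simp add: algebra_simps)
  qed
  also have "\<dots> = (\<integral>\<^sup>+z. indicator A z \<partial>(lborel \<Otimes>\<^sub>M lborel))"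
    by (subst lborel_pair.nn_integral_snd[symmetric]) auto
  also have "\<dots> = emeasure lborel A"
    using A by (simp add: lborel_prod)
  finally show "emeasure (distr lborel lborel phiM) A = emeasure lborel A" .
qed

lemma distr_swap: "distr lborel lborel prod.swap = (lborel :: (real \<times> real) measure)"
proof -
  have "distr (lborel \<Otimes>\<^sub>M lborel) (lborel \<Otimes>\<^sub>M lborel) (\<lambda>(x, y). (y, x)) = (lborel \<Otimes>\<^sub>M lborel :: (real \<times> real) measure)"
    using lborel_pair.distr_pair_swap[symmetric] by simp
  moreover have "sets (lborel \<Otimes>\<^sub>M lborel) = sets (lborel :: (real \<times> real) measure)"
    by (simp only: lborel_prod)
  ultimately show ?thesis
    by (metis (no_types, lifting) distr_cong lborel_prod prod.swap_def case_prod_beta')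
qed

lemma compact_ref_tri: "compact ref_tri"
  unfolding compact_eq_bounded_closed
proof (intro conjI)
  show "bounded ref_tri"
    by (rule bounded_subset[OF bounded_cbox[of "(0,0)" "(1,1)"]])
       (auto simp: ref_tri_def cbox_Pair_eq)
  have eq: "ref_tri = {z. 0 \<le> fst z} \<inter> {z. 0 \<le> snd z} \<inter> {z. fst z + snd z \<le> 1}"
    by (auto simp: ref_tri_def)
  show "closed ref_tri"
    unfolding eq by (intro closed_Int closed_Collect_le continuous_intros)
qed

lemma transfer_integral:
  fixes \<phi> :: "real \<times> real \<Rightarrow> real \<times> real" and g :: "real \<times> real \<Rightarrow> real"
  assumes d: "distr lborel lborel \<phi> = lborel"
    and cphi: "continuous_on UNIV \<phi>" and cg: "continuous_on UNIV g"
    and T: "\<And>z. \<phi> z \<in> ref_tri \<longleftrightarrow> z \<in> ref_tri"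
  shows "integral ref_tri (\<lambda>z. g (\<phi> z)) = integral ref_tri g"
proof -
  have mphi[measurable]: "\<phi> \<in> borel_measurable borel"
    by (rule borel_measurable_continuous_onI[OF cphi])
  have mg[measurable]: "g \<in> borel_measurable borel"
    by (rule borel_measurable_continuous_onI[OF cg])
  have sT[measurable]: "ref_tri \<in> sets borel"
    using compact_ref_tri by (simp add: borel_closed compact_imp_closed)
  have cgp: "continuous_on ref_tri (\<lambda>z. g (\<phi> z))"
    by (rule continuous_on_compose2[OF cg continuous_on_subset[OF cphi]]) auto
  have i1: "set_integrable lborel ref_tri (\<lambda>z. g (\<phi> z))"
    unfolding set_integrable_def
    by (rule borel_integrable_compact[OF compact_ref_tri cgp])
  have i2: "set_integrable lborel ref_tri g"
    unfolding set_integrable_def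
    by (rule borel_integrable_compact[OF compact_ref_tri continuous_on_subset[OF cg]]) auto
  have "integral ref_tri (\<lambda>z. g (\<phi> z)) = (\<integral>z. indicator ref_tri z *\<^sub>R g (\<phi> z) \<partial>lborel)"
    using set_borel_integral_eq_integral(2)[OF i1] by (simp add: set_lebesgue_integral_def)
  also have "\<dots> = (\<integral>z. (\<lambda>w. indicator ref_tri w *\<^sub>R g w) (\<phi> z) \<partial>lborel)"
    using T by (simp add: indicator_def)
  also have "\<dots> = integral\<^sup>L (distr lborel lborel \<phi>) (\<lambda>w. indicator ref_tri w *\<^sub>R g w)"
    by (rule integral_distr[symmetric]) auto
  also have "\<dots> = (\<integral>w. indicator ref_tri w *\<^sub>R g w \<partial>lborel)"
    using d by simp
  also have "\<dots> = integral ref_tri g"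
    using set_borel_integral_eq_integral(2)[OF i2] by (simp add: set_lebesgue_integral_def)
  finally show ?thesis .
qed

definition tri :: "nat \<Rightarrow> (nat \<times> nat) set" where
  "tri n = {(i, j). i + j \<le> n}"

lemma tri_Sigma: "tri n = Sigma {..n} (\<lambda>i. {..n - i})"
  by (auto simp: tri_def)

lemma finite_tri[simp]: "finite (tri n)"
  by (simp add: tri_Sigma)

lemma poly_alt: "poly_deg_le n p \<longleftrightarrow>
   (\<exists>c. p = (\<lambda>z. \<Sum>(i, j)\<in>tri n. c i j * fst z ^ i * snd z ^ j))"
proof -
  have "(\<lambda>(x, y). \<Sum>i\<le>n. \<Sum>j\<le>n - i. c i j * x ^ i * y ^ j)
        = (\<lambda>z. \<Sum>(i, j)\<in>tri n. c i j * fst z ^ i * snd z ^ j)" for c :: "nat \<Rightarrow> nat \<Rightarrow> real"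
    by (rule ext) (simp add: tri_Sigma sum.Sigma case_prod_beta)
  then show ?thesis unfolding poly_deg_le_def by simp
qed

lemma poly_zero: "poly_deg_le n (\<lambda>z. 0)"
  unfolding poly_alt by (rule exI[of _ "\<lambda>i j. 0"]) simp

lemma poly_add:
  assumes "poly_deg_le n p" "poly_deg_le n q"
  shows "poly_deg_le n (\<lambda>z. p z + q z)"
proof -
  obtain c d where c: "p = (\<lambda>z. \<Sum>(i, j)\<in>tri n. c i j * fst z ^ i * snd z ^ j)"
    and d: "q = (\<lambda>z. \<Sum>(i, j)\<in>tri n. d i j * fst z ^ i * snd z ^ j)"
    using assms unfolding poly_alt by blast
  show ?thesis unfolding poly_alt
    by (rule exI[of _ "\<lambda>i j. c i j + d i j"])
       (simp add: c d sum.distrib[symmetric] case_prod_beta algebra_simps)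
qed

lemma poly_scale:
  assumes "poly_deg_le n p"
  shows "poly_deg_le n (\<lambda>z. a * p z)"
proof -
  obtain c where c: "p = (\<lambda>z. \<Sum>(i, j)\<in>tri n. c i j * fst z ^ i * snd z ^ j)"
    using assms unfolding poly_alt by blast
  show ?thesis unfolding poly_alt
    by (rule exI[of _ "\<lambda>i j. a * c i j"])
       (simp add: c sum_distrib_left case_prod_beta algebra_simps)
qed

lemma poly_sum:
  assumes "finite S" "\<And>s. s \<in> S \<Longrightarrow> poly_deg_le n (f s)"
  shows "poly_deg_le n (\<lambda>z. \<Sum>s\<in>S. f s z)"
  using assms by (induction S rule: finite_induct) (auto intro: poly_zero poly_add)

lemma poly_mono:
  assumes "poly_deg_le n p" "n \<le> m"
  shows "poly_deg_le m p"
proof -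
  obtain c where c: "p = (\<lambda>z. \<Sum>(i, j)\<in>tri n. c i j * fst z ^ i * snd z ^ j)"
    using assms unfolding poly_alt by blast
  have sub: "tri n \<subseteq> tri m" using assms(2) by (auto simp: tri_def)
  show ?thesis unfolding poly_alt
  proof (rule exI[of _ "\<lambda>i j. if i + j \<le> n then c i j else 0"], rule ext)
    fix z :: "real \<times> real"
    have "(\<Sum>(i, j)\<in>tri m. (if i + j \<le> n then c i j else 0) * fst z ^ i * snd z ^ j)
        = (\<Sum>(i, j)\<in>tri n. (if i + j \<le> n then c i j else 0) * fst z ^ i * snd z ^ j)"
      by (rule sum.mono_neutral_right[OF finite_tri sub]) (auto simp: tri_def split: if_splits)
    also have "\<dots> = (\<Sum>(i, j)\<in>tri n. c i j * fst z ^ i * snd z ^ j)"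
      by (rule sum.cong) (auto simp: tri_def)
    finally show "p z = (\<Sum>(i, j)\<in>tri m. (if i + j \<le> n then c i j else 0) * fst z ^ i * snd z ^ j)"
      by (simp add: c)
  qed
qed

lemma poly_monom: "poly_deg_le (i + j) (\<lambda>z. fst z ^ i * snd z ^ j)"
  unfolding poly_alt
proof (rule exI[of _ "\<lambda>a b. if a = i \<and> b = j then 1 else 0"], rule ext)
  fix z :: "real \<times> real"
  have "(\<Sum>(a, b)\<in>tri (i + j). (if a = i \<and> b = j then 1 else 0) * fst z ^ a * snd z ^ b)
      = (\<Sum>w\<in>tri (i + j). if w = (i, j) then fst z ^ i * snd z ^ j else 0)"
    by (rule sum.cong) (auto split: if_splits)
  also have "\<dots> = fst z ^ i * snd z ^ j"
    by (subst sum.delta[OF finite_tri]) (simp add: tri_def)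
  finally show "fst z ^ i * snd z ^ j =
     (\<Sum>(a, b)\<in>tri (i + j). (if a = i \<and> b = j then 1 else 0) * fst z ^ a * snd z ^ b)" by simp
qed

lemma poly_const: "poly_deg_le n (\<lambda>z. a)"
  using poly_mono[OF poly_scale[OF poly_monom[of 0 0]], of n a] by simp

lemma poly_fst: "poly_deg_le 1 fst"
  using poly_monom[of 1 0] by simp

lemma poly_snd: "poly_deg_le 1 snd"
  using poly_monom[of 0 1] by simp

lemma poly_mult:
  assumes "poly_deg_le n p" "poly_deg_le m q"
  shows "poly_deg_le (n + m) (\<lambda>z. p z * q z)"
proof -
  obtain c where c: "p = (\<lambda>z. \<Sum>(i, j)\<in>tri n. c i j * fst z ^ i * snd z ^ j)"
    using assms unfolding poly_alt by blast
  obtain d where d: "q = (\<lambda>z. \<Sum>(k, l)\<in>tri m. d k l * fst z ^ k * snd z ^ l)"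
    using assms unfolding poly_alt by blast
  have eq: "(\<lambda>z. p z * q z) = (\<lambda>z. \<Sum>w\<in>tri n. \<Sum>v\<in>tri m.
      (c (fst w) (snd w) * d (fst v) (snd v)) * (fst z ^ (fst w + fst v) * snd z ^ (snd w + snd v)))"
    by (rule ext) (simp add: c d sum_product case_prod_beta power_add algebra_simps)
  show ?thesis unfolding eq
  proof (intro poly_sum finite_tri poly_scale)
    fix w v assume "w \<in> tri n" "v \<in> tri m"
    then have "fst w + fst v + (snd w + snd v) \<le> n + m" by (auto simp: tri_def)
    then show "poly_deg_le (n + m) (\<lambda>z. fst z ^ (fst w + fst v) * snd z ^ (snd w + snd v))"
      using poly_mono[OF poly_monom] by blast
  qed
qed

lemma poly_power:
  assumes "poly_deg_le 1 f"
  shows "poly_deg_le k (\<lambda>z. f z ^ k)"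
proof (induction k)
  case 0 then show ?case using poly_const[of 0 1] by simp
next
  case (Suc k) then show ?case using poly_mult[OF assms Suc] by simp
qed

lemma poly_compose:
  assumes "poly_deg_le n p" "poly_deg_le 1 f" "poly_deg_le 1 g"
  shows "poly_deg_le n (\<lambda>z. p (f z, g z))"
proof -
  obtain c where c: "p = (\<lambda>z. \<Sum>(i, j)\<in>tri n. c i j * fst z ^ i * snd z ^ j)"
    using assms unfolding poly_alt by blast
  have eq: "(\<lambda>z. p (f z, g z)) = (\<lambda>z. \<Sum>w\<in>tri n. c (fst w) (snd w) * (f z ^ fst w * g z ^ snd w))"
    by (rule ext) (simp add: c case_prod_beta algebra_simps)
  show ?thesis unfolding eq
  proof (intro poly_sum finite_tri poly_scale)
    fix w assume "w \<in> tri n"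
    then have "fst w + snd w \<le> n" by (auto simp: tri_def)
    then show "poly_deg_le n (\<lambda>z. f z ^ fst w * g z ^ snd w)"
      using poly_mono[OF poly_mult[OF poly_power[OF assms(2)] poly_power[OF assms(3)]]] by blast
  qed
qed

lemma poly_cont:
  assumes "poly_deg_le n p"
  shows "continuous_on UNIV p"
proof -
  obtain c where c: "p = (\<lambda>z. \<Sum>w\<in>tri n. c (fst w) (snd w) * fst z ^ fst w * snd z ^ snd w)"
    using assms unfolding poly_alt by (auto simp: case_prod_beta)
  show ?thesis unfolding c by (intro continuous_intros)
qed

lemma poly_Mop:
  assumes "poly_deg_le n p" shows "poly_deg_le n (Mop p)"
proof -
  have "poly_deg_le 1 (\<lambda>z. 1 - fst z - snd z)"
  proof -
    have "poly_deg_le 1 (\<lambda>z. 1 + (-1) * fst z + (-1) * snd z)"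
      by (intro poly_add poly_const poly_scale poly_fst poly_snd)
    then show ?thesis by simp
  qed
  then have "poly_deg_le n (\<lambda>z. p (1 - fst z - snd z, snd z))"
    by (intro poly_compose assms poly_snd)
  then show ?thesis by (simp add: Mop_def case_prod_beta')
qed

lemma poly_Rop:
  assumes "poly_deg_le n p" shows "poly_deg_le n (Rop p)"
proof -
  have "poly_deg_le n (\<lambda>z. p (snd z, fst z))"
    by (intro poly_compose assms poly_snd poly_fst)
  then show ?thesis by (simp add: Rop_def case_prod_beta')
qed

lemma cont_integrable:
  fixes g :: "real \<times> real \<Rightarrow> real"
  assumes "continuous_on UNIV g"
  shows "g integrable_on ref_tri"
proof -
  have "set_integrable lborel ref_tri g"
    unfolding set_integrable_def
    by (rule borel_integrable_compact[OF compact_ref_tri continuous_on_subset[OF assms]]) auto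
  then show ?thesis by (rule set_borel_integral_eq_integral(1))
qed

lemma Pperp_add:
  assumes "p \<in> Pperp n" "q \<in> Pperp n"
  shows "(\<lambda>z. p z + q z) \<in> Pperp n"
proof -
  have pp: "poly_deg_le n p" "poly_deg_le n q" using assms by (auto simp: Pperp_def)
  show ?thesis unfolding Pperp_def
  proof (intro CollectI conjI impI allI poly_add pp)
    fix r assume "1 \<le> n" "poly_deg_le (n - 1) r"
    then have "integral ref_tri (\<lambda>z. p z * r z) = 0" "integral ref_tri (\<lambda>z. q z * r z) = 0"
      using assms by (auto simp: Pperp_def)
    moreover have "(\<lambda>z. p z * r z) integrable_on ref_tri" "(\<lambda>z. q z * r z) integrable_on ref_tri"
      using pp poly_cont[OF \<open>poly_deg_le (n - 1) r\<close>]
      by (auto intro!: cont_integrable continuous_intros dest: poly_cont)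
    ultimately show "integral ref_tri (\<lambda>z. (p z + q z) * r z) = 0"
      by (simp add: distrib_right integral_add)
  qed
qed

lemma Pperp_scale:
  assumes "p \<in> Pperp n"
  shows "(\<lambda>z. a * p z) \<in> Pperp n"
proof -
  have pp: "poly_deg_le n p" using assms by (auto simp: Pperp_def)
  show ?thesis unfolding Pperp_def
  proof (intro CollectI conjI impI allI poly_scale pp)
    fix r assume "1 \<le> n" "poly_deg_le (n - 1) r"
    then have "integral ref_tri (\<lambda>z. p z * r z) = 0"
      using assms by (auto simp: Pperp_def)
    then show "integral ref_tri (\<lambda>z. a * p z * r z) = 0"
      using integral_mult_right[of ref_tri a "\<lambda>z. p z * r z"] by (simp add: mult.assoc)
  qed
qed

lemma Pperp_Mop:
  assumes "p \<in> Pperp n"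
  shows "Mop p \<in> Pperp n"
proof -
  have pp: "poly_deg_le n p" using assms by (auto simp: Pperp_def)
  show ?thesis unfolding Pperp_def
  proof (intro CollectI conjI impI allI poly_Mop pp)
    fix r assume r: "1 \<le> n" "poly_deg_le (n - 1) r"
    have "integral ref_tri (\<lambda>z. Mop p z * r z)
        = integral ref_tri (\<lambda>z. (\<lambda>w. p w * Mop r w) (phiM z))"
      by (simp add: Mop_def phiM_def case_prod_beta)
    also have "\<dots> = integral ref_tri (\<lambda>w. p w * Mop r w)"
    proof (rule transfer_integral[OF distr_phiM])
      show "continuous_on UNIV phiM" unfolding phiM_def by (intro continuous_intros)
      show "continuous_on UNIV (\<lambda>w. p w * Mop r w)"
        using poly_cont[OF pp] poly_cont[OF poly_Mop[OF r(2)]] by (intro continuous_intros)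
      show "phiM z \<in> ref_tri \<longleftrightarrow> z \<in> ref_tri" for z
        by (cases z) (auto simp: phiM_def ref_tri_def)
    qed
    also have "\<dots> = 0"
      using assms r poly_Mop[OF r(2)] by (auto simp: Pperp_def)
    finally show "integral ref_tri (\<lambda>z. Mop p z * r z) = 0" .
  qed
qed

lemma Pperp_Rop:
  assumes "p \<in> Pperp n"
  shows "Rop p \<in> Pperp n"
proof -
  have pp: "poly_deg_le n p" using assms by (auto simp: Pperp_def)
  show ?thesis unfolding Pperp_def
  proof (intro CollectI conjI impI allI poly_Rop pp)
    fix r assume r: "1 \<le> n" "poly_deg_le (n - 1) r"
    have "integral ref_tri (\<lambda>z. Rop p z * r z)
        = integral ref_tri (\<lambda>z. (\<lambda>w. p w * Rop r w) (prod.swap z))"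
      by (simp add: Rop_def case_prod_beta prod.swap_def)
    also have "\<dots> = integral ref_tri (\<lambda>w. p w * Rop r w)"
    proof (rule transfer_integral[OF distr_swap])
      show "continuous_on UNIV (prod.swap :: real \<times> real \<Rightarrow> real \<times> real)"
        by (intro continuous_intros)
      show "continuous_on UNIV (\<lambda>w. p w * Rop r w)"
        using poly_cont[OF pp] poly_cont[OF poly_Rop[OF r(2)]] by (intro continuous_intros)
      show "prod.swap z \<in> ref_tri \<longleftrightarrow> z \<in> ref_tri" for z
        by (cases z) (auto simp: ref_tri_def)
    qed
    also have "\<dots> = 0"
      using assms r poly_Rop[OF r(2)] by (auto simp: Pperp_def)
    finally show "integral ref_tri (\<lambda>z. Rop p z * r z) = 0" .
  qed
qed

lemma RM_eq: "Rop (Mop p) = (\<lambda>(x, y). p (1 - x - y, x))"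
  unfolding Rop_def Mop_def by (simp add: algebra_simps)

lemma MR_eq: "Mop (Rop p) = (\<lambda>(x, y). p (y, 1 - x - y))"
  by (simp add: Rop_def Mop_def)

theorem proposition16:
  fixes n :: nat
  shows "(\<lambda>p. (\<lambda>z. p z + Rop (Mop p) z + Mop (Rop p) z)) ` Pperp n
           = {p \<in> Pperp n. Rop (Mop p) = p}"
proof
  show "(\<lambda>p. (\<lambda>z. p z + Rop (Mop p) z + Mop (Rop p) z)) ` Pperp n \<subseteq> {p \<in> Pperp n. Rop (Mop p) = p}"
  proof
    fix q assume "q \<in> (\<lambda>p. (\<lambda>z. p z + Rop (Mop p) z + Mop (Rop p) z)) ` Pperp n"
    then obtain p where p: "p \<in> Pperp n" and q: "q = (\<lambda>z. p z + Rop (Mop p) z + Mop (Rop p) z)"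
      by blast
    have "q \<in> Pperp n" unfolding q
      by (intro Pperp_add Pperp_Mop Pperp_Rop p)
    moreover have "Rop (Mop q) = q"
      unfolding q by (auto simp: RM_eq MR_eq Rop_def Mop_def algebra_simps)
    ultimately show "q \<in> {p \<in> Pperp n. Rop (Mop p) = p}" by blast
  qed
next
  show "{p \<in> Pperp n. Rop (Mop p) = p} \<subseteq> (\<lambda>p. (\<lambda>z. p z + Rop (Mop p) z + Mop (Rop p) z)) ` Pperp n"
  proof
    fix p assume "p \<in> {p \<in> Pperp n. Rop (Mop p) = p}"
    then have p: "p \<in> Pperp n" and A: "Rop (Mop p) = p" by auto
    have A1: "p (1 - x - y, x) = p (x, y)" for x y
      using fun_cong[OF A, of "(x, y)"] by (simp add: RM_eq)
    have A2: "p (y, 1 - x - y) = p (x, y)" for x y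
      using A1[of y "1 - x - y"] by simp
    define r where "r = (\<lambda>z. (1/3) * p z)"
    have "r \<in> Pperp n" unfolding r_def by (rule Pperp_scale[OF p])
    moreover have "p = (\<lambda>z. r z + Rop (Mop r) z + Mop (Rop r) z)"
      by (auto simp: r_def RM_eq MR_eq A1 A2)
    ultimately show "p \<in> (\<lambda>p. (\<lambda>z. p z + Rop (Mop p) z + Mop (Rop p) z)) ` Pperp n"
      by blast
  qed
qed

end
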